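(* Let $M\in S_d^+$, let $\mathcal T$ be an $M$-reduced mesh with associated Hopf–Lax operator $\Lambda$, and fix $T\in\mathcal T$ with non-zero vertices $v_1,\dots,v_d$. Define $\delta_+:\mathbb Z^d\to\mathbb R_+\cup\{\infty\}$ by $\delta_+(z):=\infty$ if $-z\notin\mathbb R_+T:=\{rx;\ r\ge0,\ x\in T\}$, and otherwise, writing $z+\beta_1v_1+\dots+\beta_dv_d=0$ with $\beta_i\in\mathbb Z_{\ge0}$, $$\delta_+(z):=\|z\|_M+(\sin\theta_M(T))^2\sum_{i=1}^d s(\beta_i)\|v_i\|_M,\qquad s(\beta):=\sum_{k=1}^{\beta}\frac1k.$$ Then $\delta_+$ is a discrete super-solution.
   Context: $S_d^+$ is the set of $d\times d$ symmetric positive definite matrices; $\langle u,v\rangle_M:=u^TMv$, $\|u\|_M:=\sqrt{\langle u,u\rangle_M}$. An $M$-reduced mesh is a finite conforming mesh $\mathcal T$ of simplices in $\mathbb R^d$ such that: (I) the union of its simplices is a neighborhood of the origin; (II) the vertices of each $T\in\mathcal T$ lie in $\mathbb Z^d$ and $T$ has volume $1/d!$; (III) each $T\in\mathcal T$ has the origin as a vertex, and its other vertices $v_1,\dots,v_d$ satisfy $\langle v_i,v_j\rangle_M\ge0$ for all $i,j$. (When $-z\in\mathbb R_+T$ with $z\in\mathbb Z^d$, the $v_i$ form a basis of $\mathbb Z^d$, so the nonnegative integers $\beta_i$ exist and are unique.) The angle $\theta_M(T)\in[0,\pi]$ is given by $\cos\theta_M(T):=\min_{u,v\in T\setminus\{0\}}\frac{\langle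 u,v\rangle_M}{\|u\|_M\|v\|_M}$. For $\delta:\mathbb Z^d\to\mathbb R_+\cup\{\infty\}$ and $z\in\mathbb Z^d$, $\Lambda(\delta,z):=\min\{\|\sum_{i=1}^k\alpha_iw_i\|_M+\sum_{i=1}^k\alpha_i\delta(z+w_i)\}$ over $1\le k\le d$, $\alpha_i\ge0$ with $\sum_i\alpha_i=1$, and non-zero vertices $w_1,\dots,w_k$ of a common simplex of $\mathcal T$ (convention $0\times\infty=0$). A map $\delta$ is a super-solution if $\delta(0)=0$ and $\delta(z)\ge\Lambda(\delta,z)$ for all $z\in\mathbb Z^d\setminus\{0\}$. *)

theory Defs
  imports "HOL-Analysis.Analysis"
begin

text \<open>Points of R^d are vectors of type real^'d; Z^d is the set of lattice points.
  A simplex of the mesh is represented by its (finite) set of vertices S;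
  the geometric simplex is convex hull S.\<close>

definition Mip :: "real^'d^'d \<Rightarrow> real^'d \<Rightarrow> real^'d \<Rightarrow> real" where
  "Mip M u v = u \<bullet> (M *v v)"

definition Mnorm :: "real^'d^'d \<Rightarrow> real^'d \<Rightarrow> real" where
  "Mnorm M u = sqrt (Mip M u u)"

definition sym_posdef :: "real^'d^'d \<Rightarrow> bool" where
  "sym_posdef M \<longleftrightarrow> transpose M = M \<and> (\<forall>x. x \<noteq> 0 \<longrightarrow> Mip M x x > 0)"

definition lattice_pt :: "real^'d \<Rightarrow> bool" where
  "lattice_pt z \<longleftrightarrow> (\<forall>i. z $ i \<in> \<int>)"

definition M_reduced_mesh :: "real^'d^'d \<Rightarrow> (real^'d) set set \<Rightarrow> bool" where
  "M_reduced_mesh M \<T> \<longleftrightarrow>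
     finite \<T>
   \<and> (\<forall>S\<in>\<T>. finite S \<and> card S = CARD('d) + 1 \<and> \<not> affine_dependent S)
   \<and> (\<forall>S1\<in>\<T>. \<forall>S2\<in>\<T>. convex hull S1 \<inter> convex hull S2 = convex hull (S1 \<inter> S2))
   \<and> 0 \<in> interior (\<Union>S\<in>\<T>. convex hull S)
   \<and> (\<forall>S\<in>\<T>. (\<forall>v\<in>S. lattice_pt v) \<and> measure lebesgue (convex hull S) = 1 / fact CARD('d))
   \<and> (\<forall>S\<in>\<T>. 0 \<in> S \<and> (\<forall>v\<in>S - {0}. \<forall>w\<in>S - {0}. Mip M v w \<ge> 0))"

definition cos_angleM :: "real^'d^'d \<Rightarrow> (real^'d) set \<Rightarrow> real" where
  "cos_angleM M T = Inf {Mip M u v / (Mnorm M u * Mnorm M v) | u v.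
       u \<in> convex hull T - {0} \<and> v \<in> convex hull T - {0}}"

definition angleM :: "real^'d^'d \<Rightarrow> (real^'d) set \<Rightarrow> real" where
  "angleM M T = arccos (cos_angleM M T)"

text \<open>Hopf-Lax operator: nonzero vertices w_1..w_k of a common simplex are
  represented by a nonempty subset W of the nonzero vertices of some S in the mesh,
  with weights alpha on W.  Multiplication in ennreal satisfies 0 * infinity = 0.\<close>
definition HopfLax :: "real^'d^'d \<Rightarrow> (real^'d) set set \<Rightarrow> (real^'d \<Rightarrow> ennreal) \<Rightarrow> real^'d \<Rightarrow> ennreal" where
  "HopfLax M \<T> \<delta> z = Inf
     {ennreal (Mnorm M (\<Sum>w\<in>W. \<alpha> w *\<^sub>R w)) + (\<Sum>w\<in>W. ennreal (\<alpha> w) * \<delta> (z + w)) | S W \<alpha>.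
        S \<in> \<T> \<and> W \<subseteq> S - {0} \<and> W \<noteq> {} \<and> (\<forall>w\<in>W. \<alpha> w \<ge> 0) \<and> sum \<alpha> W = 1}"

definition super_solution :: "real^'d^'d \<Rightarrow> (real^'d) set set \<Rightarrow> (real^'d \<Rightarrow> ennreal) \<Rightarrow> bool" where
  "super_solution M \<T> \<delta> \<longleftrightarrow> \<delta> 0 = 0 \<and>
     (\<forall>z. lattice_pt z \<and> z \<noteq> 0 \<longrightarrow> \<delta> z \<ge> HopfLax M \<T> \<delta> z)"

definition cone_of :: "(real^'d) set \<Rightarrow> (real^'d) set" where
  "cone_of T = {r *\<^sub>R x | r x. r \<ge> 0 \<and> x \<in> convex hull T}"

definition betas :: "(real^'d) set \<Rightarrow> real^'d \<Rightarrow> (real^'d \<Rightarrow> nat)" where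
  "betas T z = (THE \<beta>. (\<forall>v. v \<notin> T - {0} \<longrightarrow> \<beta> v = 0) \<and>
                      z + (\<Sum>v\<in>T - {0}. real (\<beta> v) *\<^sub>R v) = 0)"

definition delta_plus :: "real^'d^'d \<Rightarrow> (real^'d) set \<Rightarrow> real^'d \<Rightarrow> ennreal" where
  "delta_plus M T z =
     (if - z \<notin> cone_of T then \<infinity>
      else ennreal (Mnorm M z + (sin (angleM M T))\<^sup>2 *
             (\<Sum>v\<in>T - {0}. (\<Sum>k=1..betas T z v. 1 / real k) * Mnorm M v)))"

end

theory Submission
  imports Defs "HOL-Library.Countable"
begin

typedef 'a wrap = "UNIV :: 'a set" by auto

lemma wrap_UNIV: "UNIV = range Abs_wrap" by (metis Abs_wrap_cases surj_def)

instance wrap :: (finite) finite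
proof
  show "finite (UNIV :: 'a wrap set)" by (subst wrap_UNIV) simp
qed

instantiation wrap :: (finite) linorder
begin
definition less_eq_wrap :: "'a wrap \<Rightarrow> 'a wrap \<Rightarrow> bool" where
  "less_eq_wrap x y \<longleftrightarrow> to_nat (Rep_wrap x) \<le> to_nat (Rep_wrap y)"
definition less_wrap :: "'a wrap \<Rightarrow> 'a wrap \<Rightarrow> bool" where
  "less_wrap x y \<longleftrightarrow> to_nat (Rep_wrap x) < to_nat (Rep_wrap y)"
instance
proof
  fix x y z :: "'a wrap"
  show "(x < y) = (x \<le> y \<and> \<not> y \<le> x)" unfolding less_eq_wrap_def less_wrap_def by linarith
  show "x \<le> x" unfolding less_eq_wrap_def by simp
  show "x \<le> y \<Longrightarrow> y \<le> z \<Longrightarrow> x \<le> z" unfolding less_eq_wrap_def by linarith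
  show "x \<le> y \<Longrightarrow> y \<le> x \<Longrightarrow> x = y" unfolding less_eq_wrap_def
  proof -
    assume "to_nat (Rep_wrap x) \<le> to_nat (Rep_wrap y)" "to_nat (Rep_wrap y) \<le> to_nat (Rep_wrap x)"
    then have "to_nat (Rep_wrap x) = to_nat (Rep_wrap y)" by linarith
    then have "Rep_wrap x = Rep_wrap y" by simp
    then show "x = y" by (simp add: Rep_wrap_inject)
  qed
  show "x \<le> y \<or> y \<le> x" unfolding less_eq_wrap_def by linarith
qed
end

instance wrap :: (finite) wellorder
proof
  fix P :: "'a wrap \<Rightarrow> bool" and a
  assume H: "\<And>x. (\<And>y. y < x \<Longrightarrow> P y) \<Longrightarrow> P x"
  have "\<forall>x. to_nat (Rep_wrap x) = n \<longrightarrow> P x" for n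
  proof (induction n rule: less_induct)
    case (less n)
    show ?case
    proof (intro allI impI)
      fix x :: "'a wrap" assume "to_nat (Rep_wrap x) = n"
      then have "\<And>y. y < x \<Longrightarrow> P y" using less unfolding less_wrap_def by simp
      then show "P x" by (rule H)
    qed
  qed
  then show "P a" by blast
qed

lemma bij_Rep_wrap: "bij Rep_wrap"
  by (metis Abs_wrap_inverse Rep_wrap_inverse UNIV_I bijI' )

lemma card_wrap: "CARD('a::finite wrap) = CARD('a)"
  using bij_Rep_wrap by (rule bij_betw_same_card)

definition Pw :: "real^'a \<Rightarrow> real^'a wrap" where "Pw x = (\<chi> j. x $ Rep_wrap j)"
definition Qw :: "real^'a wrap \<Rightarrow> real^'a" where "Qw y = (\<chi> i. y $ Abs_wrap i)"

lemma QP[simp]: "Qw (Pw x) = x" by (simp add: Pw_def Qw_def Abs_wrap_inverse vec_eq_iff)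
lemma PQ[simp]: "Pw (Qw y) = y" by (simp add: Pw_def Qw_def Rep_wrap_inverse vec_eq_iff)
lemma linear_Pw: "linear Pw" by (rule linearI) (auto simp: Pw_def vec_eq_iff)
lemma linear_Qw: "linear Qw" by (rule linearI) (auto simp: Qw_def vec_eq_iff)
lemma cont_Pw: "continuous_on S Pw"
  using linear_Pw linear_conv_bounded_linear linear_continuous_on by blast
lemma cont_Qw: "continuous_on S Qw"
  using linear_Qw linear_conv_bounded_linear linear_continuous_on by blast

lemma prod_Basis_vec: "(\<Prod>b\<in>(Basis :: (real^'n) set). f b) = (\<Prod>i\<in>UNIV. f (axis i 1))"
proof -
  have "(Basis :: (real^'n) set) = range (\<lambda>i. axis i 1)" by (auto simp: Basis_vec_def)
  moreover have "inj (\<lambda>i::'n. axis i (1::real))" by (auto simp: inj_on_def axis_eq_axis)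
  ultimately show ?thesis by (metis (no_types, lifting) prod.reindex_cong)
qed

lemma lborel_Pw: "(lborel :: (real^'a::finite wrap) measure) = distr lborel borel Pw"
proof (rule lborel_eqI)
  fix l u :: "real^'a wrap"
  assume le: "\<And>b. b \<in> Basis \<Longrightarrow> l \<bullet> b \<le> u \<bullet> b"
  have meas: "Pw \<in> borel_measurable borel" by (intro borel_measurable_continuous_onI cont_Pw)
  have pre: "Pw -` box l u = box (Qw l) (Qw u)"
  proof -
    have "(\<forall>j. l$j < x$Rep_wrap j \<and> x$Rep_wrap j < u$j) \<longleftrightarrow> (\<forall>i. l$Abs_wrap i < x$i \<and> x$i < u$Abs_wrap i)" for x
      by (metis Abs_wrap_inverse Rep_wrap_inverse UNIV_I)
    then show ?thesis by (auto simp: mem_box_cart Pw_def Qw_def)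
  qed
  have le': "Qw l \<bullet> b \<le> Qw u \<bullet> b" if "b \<in> Basis" for b
  proof -
    from that obtain i where b: "b = axis i 1" unfolding Basis_vec_def by auto
    have "axis (Abs_wrap i) (1::real) \<in> Basis" by (auto simp: Basis_vec_def)
    from le[OF this] show ?thesis by (simp add: b Qw_def inner_axis)
  qed
  have bij: "bij (Abs_wrap :: 'a \<Rightarrow> 'a wrap)"
    by (metis Abs_wrap_inverse Rep_wrap_inverse UNIV_I bijI')
  have "emeasure (distr lborel borel Pw) (box l u) = emeasure lborel (Pw -` box l u \<inter> space lborel)"
    by (rule emeasure_distr[OF _ ]) (auto simp: meas)
  also have "\<dots> = emeasure lborel (box (Qw l) (Qw u))" by (simp add: pre)
  also have "\<dots> = (\<Prod>b\<in>Basis. (Qw u - Qw l) \<bullet> b)" using le' by simp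
  also have "\<dots> = (\<Prod>b\<in>Basis. (u - l) \<bullet> b)"
    unfolding prod_Basis_vec
    using prod.reindex_bij_betw[OF bij, of "\<lambda>j. (u - l) \<bullet> axis j 1"]
    by (simp add: Qw_def inner_axis)
  finally show "emeasure (distr lborel borel Pw) (box l u) = (\<Prod>b\<in>Basis. (u - l) \<bullet> b)" .
qed simp

lemma inj_Pw: "inj Pw" by (metis QP injI)

lemma measure_Pw_image:
  fixes K :: "(real^'a::finite) set"
  assumes "compact K"
  shows "measure lebesgue (Pw ` K) = measure lebesgue K"
proof -
  have cK: "compact (Pw ` K)" using assms cont_Pw compact_continuous_image by blast
  have bK: "Pw ` K \<in> sets borel" using cK by (simp add: compact_imp_closed borel_closed)
  have bK0: "K \<in> sets borel" using assms by (simp add: compact_imp_closed borel_closed)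
  have meas: "Pw \<in> borel_measurable borel" by (intro borel_measurable_continuous_onI cont_Pw)
  have "measure lebesgue (Pw ` K) = measure (lborel :: (real^'a wrap) measure) (Pw ` K)"
    using bK by simp
  also have "\<dots> = measure (distr lborel borel Pw) (Pw ` K)" by (simp only: lborel_Pw[symmetric])
  also have "\<dots> = measure lborel (Pw -` (Pw ` K) \<inter> space lborel)"
    by (rule measure_distr) (use meas bK in auto)
  also have "Pw -` (Pw ` K) \<inter> space lborel = K" by (auto dest: injD[OF inj_Pw])
  also have "measure lborel K = measure lebesgue K" using bK0 by simp
  finally show ?thesis .
qed

lemma Pw0[simp]: "Pw 0 = 0" by (simp add: Pw_def vec_eq_iff)

lemma det_Ints:
  fixes A :: "real^'n^'n"
  assumes "\<And>i j. A$i$j \<in> \<int>"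
  shows "det A \<in> \<int>"
  unfolding det_def
  by (intro Ints_sum Ints_mult Ints_prod) (auto simp: assms)

lemma unimodular:
  fixes T :: "(real^'d) set"
  assumes fin: "finite T" and card: "card T = CARD('d) + 1" and z0: "0 \<in> T"
    and vol: "measure lebesgue (convex hull T) = 1 / fact CARD('d)"
    and lat: "\<forall>v\<in>T. lattice_pt v"
  shows "(\<forall>c c'. (\<Sum>v\<in>T-{0}. c v *\<^sub>R v) = (\<Sum>v\<in>T-{0}. c' v *\<^sub>R v) \<longrightarrow> (\<forall>v\<in>T-{0}. c v = c' v))
       \<and> (\<forall>c z. lattice_pt z \<and> z = (\<Sum>v\<in>T-{0}. c v *\<^sub>R v) \<longrightarrow> (\<forall>v\<in>T-{0}. c v \<in> \<int>))"
proof -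
  have fin0: "finite (T - {0})" using fin by simp
  have card0: "card (T - {0}) = CARD('d wrap)" using card z0 fin by (simp add: card_wrap)
  obtain g where g: "bij_betw g (UNIV :: 'd wrap set) (T - {0})"
    using finite_same_card_bij[of "UNIV :: 'd wrap set" "T - {0}"] fin0 card0 by auto
  define A :: "real^'d wrap^'d wrap" where "A = (\<chi> i j. Pw (g j) $ i)"
  have sumrep: "Pw (\<Sum>v\<in>T-{0}. c v *\<^sub>R v) = A *v (\<chi> j. c (g j))" for c
  proof -
    have "(\<Sum>v\<in>T-{0}. c v * v $ k) = (\<Sum>j\<in>UNIV. c (g j) * g j $ k)" for k
      using sum.reindex_bij_betw[OF g, of "\<lambda>v. c v * v $ k"] by simp
    then show ?thesis
      by (simp add: vec_eq_iff Pw_def A_def matrix_vector_mult_def mult.commute)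
  qed
  have detA: "\<bar>det A\<bar> = 1"
  proof -
    have bijPg: "bij_betw (Pw \<circ> g) UNIV (Pw ` T - {0})"
    proof -
      have "Pw ` T - {0} = Pw ` (T - {0})"
        using image_set_diff[OF inj_Pw, of T "{0}"] by (simp add: Pw0)
      moreover have "bij_betw Pw (T - {0}) (Pw ` (T - {0}))"
        using inj_Pw by (meson bij_betw_imageI inj_on_subset subset_UNIV)
      ultimately show ?thesis using bij_betw_trans[OF g] by simp
    qed
    have cardX: "card (Pw ` T) = Suc CARD('d wrap)"
      using card card_image[OF inj_on_subset[OF inj_Pw subset_UNIV[of T]]] by (simp add: card_wrap)
    have Aeq: "A = (\<chi> i j. (Pw \<circ> g) j $ i - 0 $ i)" by (simp add: A_def)
    have "measure lborel (convex hull (Pw ` T)) = \<bar>det A\<bar> / fact CARD('d wrap)"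
      unfolding Aeq
    proof (rule content_simplex[of "Pw ` T" 0 "Pw \<circ> g"])
      show "finite (Pw ` T)" using fin by simp
      show "card (Pw ` T) = Suc CARD('d wrap)" by (rule cardX)
      show "0 \<in> Pw ` T" using z0 Pw0 by (metis image_eqI)
      show "bij_betw (Pw \<circ> g) UNIV (Pw ` T - {0})" by (rule bijPg)
    qed
    moreover have "measure lborel (convex hull (Pw ` T)) = measure lebesgue (convex hull (Pw ` T))"
      using finite_imp_compact_convex_hull[of "Pw ` T"] fin
      by (simp add: compact_imp_closed borel_closed)
    moreover have "convex hull (Pw ` T) = Pw ` (convex hull T)"
      by (rule convex_hull_linear_image[OF linear_Pw, symmetric])
    moreover have "measure lebesgue (Pw ` (convex hull T)) = 1 / fact CARD('d)"
      using measure_Pw_image[OF finite_imp_compact_convex_hull[OF fin]] vol by simp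
    ultimately show ?thesis by (simp add: card_wrap)
  qed
  then have dA: "det A \<noteq> 0" by auto
  have rg: "range g = T - {0}" using g by (simp add: bij_betw_def)
  have uniq: "x = y" if "A *v x = A *v y" for x y
  proof -
    have "x = (\<chi> k. det(\<chi> i j. if j=k then (A *v y)$i else A$i$j) / det A)"
      using that by (rule cramer[OF dA, THEN iffD1])
    moreover have "y = (\<chi> k. det(\<chi> i j. if j=k then (A *v y)$i else A$i$j) / det A)"
      by (rule cramer[OF dA, THEN iffD1]) (rule refl)
    ultimately show ?thesis by simp
  qed
  show ?thesis
  proof (intro conjI allI impI)
    fix c c' :: "real^'d \<Rightarrow> real"
    assume eq: "(\<Sum>v\<in>T-{0}. c v *\<^sub>R v) = (\<Sum>v\<in>T-{0}. c' v *\<^sub>R v)"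
    have "A *v (\<chi> j. c (g j)) = A *v (\<chi> j. c' (g j))" using sumrep[of c] sumrep[of c'] eq by simp
    then have e: "(\<chi> j. c (g j)) = (\<chi> j. c' (g j))" by (rule uniq)
    have "c (g j) = c' (g j)" for j
    proof -
      have "(\<chi> j. c (g j)) $ j = (\<chi> j. c' (g j)) $ j" using e by simp
      then show ?thesis by simp
    qed
    then show "\<forall>v\<in>T-{0}. c v = c' v" using rg by (metis rangeE)
  next
    fix c :: "real^'d \<Rightarrow> real" and z
    assume H: "lattice_pt z \<and> z = (\<Sum>v\<in>T-{0}. c v *\<^sub>R v)"
    define b where "b = Pw z"
    have "A *v (\<chi> j. c (g j)) = b" using sumrep[of c] H b_def by simp
    then have x: "(\<chi> j. c (g j)) = (\<chi> k. det(\<chi> i j. if j=k then b$i else A$i$j) / det A)"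
      by (rule cramer[OF dA, THEN iffD1])
    have gl: "lattice_pt (g j)" for j using rg lat by auto
    have "c (g k) \<in> \<int>" for k
    proof -
      have "(\<chi> j. c (g j)) $ k = (\<chi> k. det(\<chi> i j. if j=k then b$i else A$i$j) / det A) $ k"
        using x by simp
      then have "c (g k) = det(\<chi> i j. if j=k then b$i else A$i$j) / det A" by simp
      moreover have "det(\<chi> i j. if j=k then b$i else A$i$j) \<in> \<int>"
        by (rule det_Ints) (use H gl in \<open>auto simp: b_def A_def Pw_def lattice_pt_def\<close>)
      moreover have "det A = 1 \<or> det A = -1" using detA by linarith
      ultimately show ?thesis by auto
    qed
    then show "\<forall>v\<in>T-{0}. c v \<in> \<int>" using rg by (metis rangeE)
  qed
qed

lemma Mip_add_right: "Mip M u (v + w) = Mip M u v + Mip M u w"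
  by (simp add: Mip_def matrix_vector_right_distrib inner_add_right)
lemma Mip_diff_right: "Mip M u (v - w) = Mip M u v - Mip M u w"
  by (simp add: Mip_def matrix_vector_mult_diff_distrib inner_diff_right)
lemma Mip_scale_right: "Mip M u (c *\<^sub>R v) = c * Mip M u v"
  by (simp add: Mip_def matrix_vector_mult_scaleR)
lemma Mip_add_left: "Mip M (u + v) w = Mip M u w + Mip M v w"
  by (simp add: Mip_def inner_add_left)
lemma Mip_diff_left: "Mip M (u - v) w = Mip M u w - Mip M v w"
  by (simp add: Mip_def inner_diff_left)
lemma Mip_scale_left: "Mip M (c *\<^sub>R u) w = c * Mip M u w"
  by (simp add: Mip_def)
lemma Mip_zero_left[simp]: "Mip M 0 w = 0" by (simp add: Mip_def)
lemma Mip_zero_right[simp]: "Mip M u 0 = 0" by (simp add: Mip_def)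
lemma Mip_sum_left: "Mip M (\<Sum>x\<in>S. f x) w = (\<Sum>x\<in>S. Mip M (f x) w)"
  by (simp add: Mip_def inner_sum_left)
lemma Mip_sum_right: "Mip M u (\<Sum>x\<in>S. f x) = (\<Sum>x\<in>S. Mip M u (f x))"
proof (induction S rule: infinite_finite_induct)
  case (insert x F) then show ?case by (simp add: Mip_add_right)
qed auto

lemma Mip_sym: assumes "sym_posdef M" shows "Mip M u v = Mip M v u"
proof -
  have tM: "transpose M = M" using assms by (simp add: sym_posdef_def)
  have "Mip M u v = (u v* M) \<bullet> v" by (simp add: Mip_def dot_lmul_matrix)
  also have "u v* M = transpose M *v u" by simp
  also have "\<dots> = M *v u" using tM by simp
  finally show ?thesis by (simp add: Mip_def inner_commute)
qed

lemma Mip_nonneg: assumes "sym_posdef M" shows "Mip M x x \<ge> 0"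
  using assms by (cases "x = 0") (auto simp: sym_posdef_def less_imp_le)

lemma Mip_pos: assumes "sym_posdef M" "x \<noteq> 0" shows "Mip M x x > 0"
  using assms by (auto simp: sym_posdef_def)

lemma Mnorm_sq: assumes "sym_posdef M" shows "(Mnorm M x)^2 = Mip M x x"
  unfolding Mnorm_def by (rule real_sqrt_pow2[OF Mip_nonneg[OF assms]])

lemma Mnorm_nonneg: assumes "sym_posdef M" shows "Mnorm M x \<ge> 0" using Mip_nonneg[OF assms] by (simp add: Mnorm_def)
lemma Mnorm_zero[simp]: "Mnorm M 0 = 0" by (simp add: Mnorm_def)
lemma Mnorm_pos: assumes "sym_posdef M" "x \<noteq> 0" shows "Mnorm M x > 0"
  using Mip_pos[OF assms] by (simp add: Mnorm_def)
lemma Mnorm_scale: "Mnorm M (c *\<^sub>R x) = \<bar>c\<bar> * Mnorm M x"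
proof -
  have "Mip M (c *\<^sub>R x) (c *\<^sub>R x) = c^2 * Mip M x x"
    by (simp add: Mip_scale_left Mip_scale_right power2_eq_square)
  then show ?thesis by (simp add: Mnorm_def real_sqrt_mult)
qed
lemma Mnorm_uminus: "Mnorm M (- x) = Mnorm M x"
  using Mnorm_scale[of M "-1" x] by simp

lemma Mip_CS: assumes "sym_posdef M" shows "(Mip M u v)^2 \<le> Mip M u u * Mip M v v"
proof (cases "v = 0")
  case True then show ?thesis by simp
next
  case False
  define t where "t = Mip M u v / Mip M v v"
  have vp: "Mip M v v > 0" using Mip_pos[OF assms False] .
  have "0 \<le> Mip M (u - t *\<^sub>R v) (u - t *\<^sub>R v)" by (rule Mip_nonneg[OF assms])
  also have "\<dots> = Mip M u u - 2 * t * Mip M u v + t^2 * Mip M v v"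
    using Mip_sym[OF assms, of v u]
    by (simp add: Mip_diff_left Mip_diff_right Mip_scale_left Mip_scale_right algebra_simps power2_eq_square)
  also have "\<dots> = Mip M u u - (Mip M u v)^2 / Mip M v v"
    using vp by (simp add: t_def field_simps power2_eq_square)
  finally have "(Mip M u v)^2 / Mip M v v \<le> Mip M u u" by simp
  then show ?thesis using vp by (simp add: field_simps)
qed

lemma key_ineq:
  fixes a b R g s2 \<beta> :: real
  assumes b: "b > 0" and be: "\<beta> \<ge> 1" and g: "g \<ge> \<beta> * b^2" and a2: "a^2 = R^2 + 2*g - b^2"
    and a0: "a \<ge> 0" and R0: "R \<ge> 0"
    and cs: "(g - b^2)^2 \<le> R^2 * b^2"
    and cone: "R^2 * b^2 - (g - b^2)^2 \<le> s2 * R^2 * b^2" and s0: "0 \<le> s2"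
  shows "\<beta> * (R - a + g / a) \<le> s2 * b"
proof -
  have "1 * b^2 \<le> \<beta> * b^2" by (rule mult_right_mono) (use be in auto)
  then have gb: "g \<ge> b^2" using g by linarith
  have "a^2 \<ge> b^2" using a2 gb zero_le_power2[of R] by linarith
  then have ab0: "a \<ge> b" using a0 by (rule power2_le_imp_le)
  then have apos: "a > 0" using b by linarith
  have "a^2*b^2 - g^2 = (R^2 + 2*g - b^2)*b^2 - g^2" using a2 by simp
  then have N: "a^2*b^2 - g^2 = R^2 * b^2 - (g - b^2)^2" by (simp add: algebra_simps power2_eq_square)
  have "(a*b)^2 = a^2*b^2" by (simp add: power_mult_distrib)
  then have "g^2 \<le> (a*b)^2" using N cs by linarith
  then have "g \<le> a*b" by (rule power2_le_imp_le) (use apos b in simp)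
  then have "\<beta> * b^2 \<le> a * b" using g by linarith
  then have "(\<beta> * b) * b \<le> a * b" by (simp add: power2_eq_square mult.assoc)
  then have ab: "\<beta> * b \<le> a" using b by (rule mult_right_le_imp_le)
  have "R^2 \<le> a^2" using a2 gb zero_le_power2[of b] by linarith
  then have aR: "R \<le> a" using a0 by (rule power2_le_imp_le)
  show ?thesis
  proof (cases "R = 0")
    case True
    have "g / a - a = (g - a^2)/a" using apos by (simp add: field_simps power2_eq_square)
    also have "\<dots> \<le> 0" using True a2 gb apos by (simp add: divide_nonpos_pos)
    finally have "R - a + g/a \<le> 0" using True by simp
    then have "\<beta> * (R - a + g/a) \<le> 0" using be by (simp add: mult_nonneg_nonpos)
    also have "0 \<le> s2 * b" using s0 b by simp
    finally show ?thesis .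
  next
    case False
    then have Rp: "R > 0" using R0 by simp
    define D where "D = a*(a*R + a^2 - g)"
    have D1: "a*R + a^2 - g \<ge> a * R" using a2 gb zero_le_power2[of R] zero_le_power2[of b] by linarith
    have "a * R > 0" using apos Rp by simp
    then have "a*R + a^2 - g > 0" using D1 by linarith
    then have Dpos: "D > 0" unfolding D_def using apos by simp
    have Da: "(R - a + g/a) * a = a*R - a^2 + g" using apos by (simp add: field_simps power2_eq_square)
    have "(R - a + g/a) * D = ((R - a + g/a) * a) * (a*R + a^2 - g)" unfolding D_def by simp
    also have "\<dots> = (a*R - a^2 + g) * (a*R + a^2 - g)" using Da by simp
    also have "\<dots> = a^2*R^2 - a^2*a^2 + 2*a^2*g - g^2" by (simp add: algebra_simps power2_eq_square)
    also have "a^2*R^2 = a^2*(a^2 - 2*g + b^2)" using a2 by simp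
    finally have Deq: "(R - a + g/a) * D = a^2*b^2 - g^2" by (simp add: algebra_simps)
    have E: "R - a + g/a = (R^2 * b^2 - (g - b^2)^2) / D" using Deq N Dpos by (simp add: field_simps)
    have Dge: "D \<ge> a^2 * R" unfolding D_def using D1 apos by (simp add: power2_eq_square mult_left_mono mult.assoc)
    have "\<beta> * (R - a + g/a) \<le> \<beta> * (s2 * R^2 * b^2) / D"
      unfolding E using be cone Dpos by (simp add: divide_right_mono mult_left_mono)
    also have "\<dots> \<le> \<beta> * (s2 * R^2 * b^2) / (a^2 * R)"
      by (rule divide_left_mono) (use be s0 Rp apos Dge Dpos in \<open>auto simp: zero_less_mult_iff\<close>)
    also have "\<dots> = s2 * b * ((\<beta> * b) * R / a^2)" using Rp apos by (simp add: field_simps power2_eq_square)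
    also have "\<dots> \<le> s2 * b * 1"
    proof -
      have "(\<beta> * b) * R \<le> a * a" by (rule mult_mono) (use ab aR Rp be b in auto)
      then have "(\<beta> * b) * R / a^2 \<le> 1" using apos by (simp add: power2_eq_square)
      then show ?thesis by (rule mult_left_mono) (use s0 b in auto)
    qed
    finally show ?thesis by simp
  qed
qed

lemma cone_iff:
  fixes T :: "(real^'d) set"
  assumes fin: "finite T" and z0: "0 \<in> T"
  shows "y \<in> cone_of T \<longleftrightarrow> (\<exists>c. (\<forall>v\<in>T-{0}. c v \<ge> 0) \<and> y = (\<Sum>v\<in>T-{0}. c v *\<^sub>R v))"
proof
  assume "y \<in> cone_of T"
  then obtain r x where r: "r \<ge> 0" and x: "x \<in> convex hull T" and y: "y = r *\<^sub>R x"
    by (auto simp: cone_of_def)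
  from x obtain u where u0: "\<forall>t\<in>T. 0 \<le> u t" and xs: "x = (\<Sum>t\<in>T. u t *\<^sub>R t)"
    using convex_hull_finite[OF fin] by auto
  have "x = (\<Sum>t\<in>T-{0}. u t *\<^sub>R t)"
    using xs sum.remove[OF fin z0, of "\<lambda>t. u t *\<^sub>R t"] by simp
  then have "y = (\<Sum>t\<in>T-{0}. (r * u t) *\<^sub>R t)" using y by (simp add: scaleR_sum_right)
  then show "\<exists>c. (\<forall>v\<in>T-{0}. c v \<ge> 0) \<and> y = (\<Sum>v\<in>T-{0}. c v *\<^sub>R v)"
    using r u0 by (intro exI[of _ "\<lambda>t. r * u t"]) auto
next
  assume "\<exists>c. (\<forall>v\<in>T-{0}. c v \<ge> 0) \<and> y = (\<Sum>v\<in>T-{0}. c v *\<^sub>R v)"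
  then obtain c where c0: "\<forall>v\<in>T-{0}. c v \<ge> 0" and y: "y = (\<Sum>v\<in>T-{0}. c v *\<^sub>R v)" by blast
  define S where "S = (\<Sum>v\<in>T-{0}. c v)"
  have S0: "S \<ge> 0" unfolding S_def by (rule sum_nonneg) (use c0 in blast)
  show "y \<in> cone_of T"
  proof (cases "S = 0")
    case True
    then have "\<forall>v\<in>T-{0}. c v = 0" using sum_nonneg_eq_0_iff[of "T-{0}" c] c0 fin unfolding S_def by blast
    then have "y = 0" using y by simp
    moreover have "(0::real^'d) \<in> convex hull T" using z0 by (simp add: hull_inc)
    ultimately show ?thesis unfolding cone_of_def by (auto intro!: exI[of _ 0])
  next
    case False
    then have Sp: "S > 0" using S0 by simp
    define u where "u t = (if t = 0 then 0 else c t / S)" for t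
    have "(\<Sum>t\<in>T. u t) = (\<Sum>t\<in>T-{0}. u t)" using sum.remove[OF fin z0, of u] by (simp add: u_def)
    also have "\<dots> = (\<Sum>t\<in>T-{0}. c t / S)" by (rule sum.cong) (auto simp: u_def)
    also have "\<dots> = 1" using Sp by (simp add: S_def sum_divide_distrib[symmetric])
    finally have u1: "(\<Sum>t\<in>T. u t) = 1" .
    have "(\<Sum>t\<in>T. u t *\<^sub>R t) = (\<Sum>t\<in>T-{0}. u t *\<^sub>R t)"
      using sum.remove[OF fin z0, of "\<lambda>t. u t *\<^sub>R t"] by (simp add: u_def)
    also have "\<dots> = (\<Sum>t\<in>T-{0}. (1/S) *\<^sub>R (c t *\<^sub>R t))" by (rule sum.cong) (auto simp: u_def)
    also have "\<dots> = (1/S) *\<^sub>R y" using y by (simp add: scaleR_sum_right)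
    finally have xe: "(\<Sum>t\<in>T. u t *\<^sub>R t) = (1/S) *\<^sub>R y" .
    have "(1/S) *\<^sub>R y \<in> convex hull T"
      unfolding convex_hull_finite[OF fin] using u1 xe c0 Sp
      by (auto intro!: exI[of _ u] simp: u_def)
    moreover have "y = S *\<^sub>R ((1/S) *\<^sub>R y)" using Sp by simp
    ultimately show ?thesis unfolding cone_of_def using S0 by blast
  qed
qed

lemma Mip_comb_nonneg:
  assumes "\<forall>s\<in>S. \<forall>t\<in>S. Mip M s t \<ge> 0" "\<forall>s\<in>S. c s \<ge> 0" "\<forall>s\<in>S. d s \<ge> 0"
  shows "Mip M (\<Sum>s\<in>S. c s *\<^sub>R s) (\<Sum>t\<in>S. d t *\<^sub>R t) \<ge> 0"
  unfolding Mip_sum_left Mip_sum_right Mip_scale_left Mip_scale_right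
  using assms by (intro sum_nonneg mult_nonneg_nonneg) auto

lemma Mip_hull_nonneg:
  fixes T :: "(real^'d) set"
  assumes fin: "finite T" and z0: "0 \<in> T"
    and nn: "\<forall>v\<in>T-{0}. \<forall>w\<in>T-{0}. Mip M v w \<ge> 0"
    and x: "x \<in> convex hull T" and y: "y \<in> convex hull T"
  shows "Mip M x y \<ge> 0"
proof -
  have nn': "\<forall>s\<in>T. \<forall>t\<in>T. Mip M s t \<ge> 0"
  proof (intro ballI)
    fix s t assume "s \<in> T" "t \<in> T"
    then show "Mip M s t \<ge> 0" using nn by (cases "s = 0"; cases "t = 0") auto
  qed
  from x obtain u where u0: "\<forall>t\<in>T. 0 \<le> u t" and xs: "x = (\<Sum>t\<in>T. u t *\<^sub>R t)"
    using convex_hull_finite[OF fin] by auto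
  from y obtain u' where u0': "\<forall>t\<in>T. 0 \<le> u' t" and ys: "y = (\<Sum>t\<in>T. u' t *\<^sub>R t)"
    using convex_hull_finite[OF fin] by auto
  show ?thesis unfolding xs ys by (rule Mip_comb_nonneg[OF nn' u0 u0'])
qed

lemma cos_facts:
  fixes T :: "(real^'d) set"
  assumes pos: "sym_posdef M" and fin: "finite T" and z0: "0 \<in> T"
    and nn: "\<forall>v\<in>T-{0}. \<forall>w\<in>T-{0}. Mip M v w \<ge> 0" and ne: "T - {0} \<noteq> {}"
  shows "0 \<le> cos_angleM M T" "cos_angleM M T \<le> 1"
    "\<And>u v. u \<in> convex hull T - {0} \<Longrightarrow> v \<in> convex hull T - {0} \<Longrightarrow>
        cos_angleM M T \<le> Mip M u v / (Mnorm M u * Mnorm M v)"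
proof -
  define X where "X = {Mip M u v / (Mnorm M u * Mnorm M v) | u v.
       u \<in> convex hull T - {0} \<and> v \<in> convex hull T - {0}}"
  have C: "cos_angleM M T = Inf X" by (simp add: cos_angleM_def X_def)
  have nonneg: "x \<ge> 0" if "x \<in> X" for x
  proof -
    from that obtain u v where x: "x = Mip M u v / (Mnorm M u * Mnorm M v)"
      and u: "u \<in> convex hull T" and v: "v \<in> convex hull T" by (auto simp: X_def)
    have "Mip M u v \<ge> 0" by (rule Mip_hull_nonneg[OF fin z0 nn u v])
    moreover have "Mnorm M u * Mnorm M v \<ge> 0" using Mnorm_nonneg[OF pos] by simp
    ultimately show ?thesis using x by simp
  qed
  have bdd: "bdd_below X" by (rule bdd_belowI[of _ 0]) (rule nonneg)
  obtain v0 where v0: "v0 \<in> T - {0}" using ne by blast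
  have v0h: "v0 \<in> convex hull T - {0}" using v0 by (auto simp: hull_inc)
  have "Mip M v0 v0 / (Mnorm M v0 * Mnorm M v0) = 1"
    using Mnorm_sq[OF pos, of v0] Mip_pos[OF pos, of v0] v0 by (simp add: power2_eq_square)
  then have oneX: "1 \<in> X" unfolding X_def using v0h by force
  then have Xne: "X \<noteq> {}" by auto
  show "0 \<le> cos_angleM M T" unfolding C by (rule cInf_greatest[OF Xne nonneg])
  show "cos_angleM M T \<le> 1" unfolding C by (rule cInf_lower[OF oneX bdd])
  fix u v assume "u \<in> convex hull T - {0}" "v \<in> convex hull T - {0}"
  then have "Mip M u v / (Mnorm M u * Mnorm M v) \<in> X" unfolding X_def by blast
  then show "cos_angleM M T \<le> Mip M u v / (Mnorm M u * Mnorm M v)" unfolding C by (rule cInf_lower[OF _ bdd])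
qed

lemma sin_sq:
  assumes "0 \<le> C" "C \<le> 1"
  shows "(sin (arccos C))^2 = 1 - C^2"
proof -
  have "\<bar>C\<bar> \<le> 1" using assms by simp
  then have "sin (arccos C) = sqrt (1 - C^2)" by (rule sin_arccos_abs)
  moreover have "1 - C^2 \<ge> 0" using assms by (simp add: power_le_one abs_square_le_1)
  ultimately show ?thesis by simp
qed

lemma sum_ineq:
  fixes \<beta> R g b :: "'x \<Rightarrow> real"
  assumes fin: "finite W" and B: "B = (\<Sum>w\<in>W. \<beta> w)" and Bp: "B > 0"
    and bpos: "\<forall>w\<in>W. \<beta> w > 0" and ap: "a > 0"
    and gs: "(\<Sum>w\<in>W. \<beta> w * g w) = a^2"
    and key: "\<forall>w\<in>W. \<beta> w * (R w - a + g w / a) \<le> s2 * b w"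
  shows "a / B + (\<Sum>w\<in>W. (\<beta> w / B) * (R w + s2 * (Hs - b w / \<beta> w))) \<le> a + s2 * Hs"
proof -
  have "(\<Sum>w\<in>W. (\<beta> w / B) * (R w + s2 * (Hs - b w / \<beta> w)))
      = (\<Sum>w\<in>W. (\<beta> w * R w + s2 * Hs * \<beta> w - s2 * b w) / B)"
    by (rule sum.cong) (use bpos in \<open>auto simp: field_simps\<close>)
  also have "\<dots> \<le> (\<Sum>w\<in>W. (\<beta> w * a - \<beta> w * g w / a + s2 * Hs * \<beta> w) / B)"
  proof (rule sum_mono)
    fix w assume w: "w \<in> W"
    have "\<beta> w * (R w - a + g w / a) = \<beta> w * R w - \<beta> w * a + \<beta> w * g w / a"
      by (simp add: algebra_simps)
    then have "\<beta> w * R w + s2 * Hs * \<beta> w - s2 * b w \<le> \<beta> w * a - \<beta> w * g w / a + s2 * Hs * \<beta> w"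
      using key w by auto
    then show "(\<beta> w * R w + s2 * Hs * \<beta> w - s2 * b w) / B \<le> (\<beta> w * a - \<beta> w * g w / a + s2 * Hs * \<beta> w) / B"
      using Bp by (simp add: divide_right_mono)
  qed
  also have "\<dots> = ((\<Sum>w\<in>W. \<beta> w) * a - (\<Sum>w\<in>W. \<beta> w * g w) / a + s2 * Hs * (\<Sum>w\<in>W. \<beta> w)) / B"
    by (simp add: sum_divide_distrib[symmetric] sum_subtractf sum.distrib sum_distrib_left sum_distrib_right)
  also have "\<dots> = a - a / B + s2 * Hs"
    using Bp ap unfolding gs B[symmetric] by (simp add: field_simps power2_eq_square)
  finally show ?thesis by simp
qed

lemma cone_angle:
  fixes T :: "(real^'d) set"
  assumes pos: "sym_posdef M" and fin: "finite T" and z0: "0 \<in> T"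
    and nn: "\<forall>v\<in>T-{0}. \<forall>w\<in>T-{0}. Mip M v w \<ge> 0" and ne: "T - {0} \<noteq> {}"
    and y: "y \<in> cone_of T" and y0: "y \<noteq> 0" and w: "w \<in> T - {0}"
  shows "(Mnorm M y)^2 * (Mnorm M w)^2 - (Mip M y w)^2
         \<le> (1 - (cos_angleM M T)^2) * ((Mnorm M y)^2 * (Mnorm M w)^2)"
proof -
  define C where "C = cos_angleM M T"
  from y obtain r x where r: "r \<ge> 0" and x: "x \<in> convex hull T" and yx: "y = r *\<^sub>R x"
    by (auto simp: cone_of_def)
  have x0: "x \<noteq> 0" and r0: "r \<noteq> 0" using y0 yx by auto
  have rp: "r > 0" using r r0 by simp
  have wh: "w \<in> convex hull T - {0}" using w by (auto simp: hull_inc)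
  define c where "c = Mip M x w / (Mnorm M x * Mnorm M w)"
  have Cc: "C \<le> c" unfolding C_def c_def
    by (rule cos_facts(3)[OF pos fin z0 nn ne]) (use x x0 wh in auto)
  have C0: "0 \<le> C" unfolding C_def by (rule cos_facts(1)[OF pos fin z0 nn ne])
  have nx: "Mnorm M x > 0" using Mnorm_pos[OF pos x0] .
  have nw: "Mnorm M w > 0" using Mnorm_pos[OF pos] w by auto
  have ny: "Mnorm M y = r * Mnorm M x" using yx rp by (simp add: Mnorm_scale)
  have "Mip M y w = r * Mip M x w" using yx by (simp add: Mip_scale_left)
  also have "Mip M x w = c * (Mnorm M x * Mnorm M w)" using nx nw by (simp add: c_def)
  finally have gy: "Mip M y w = c * (Mnorm M y * Mnorm M w)" using ny by simp
  have "C^2 \<le> c^2" using Cc C0 by (rule power_mono)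
  then have "C^2 * ((Mnorm M y)^2 * (Mnorm M w)^2) \<le> c^2 * ((Mnorm M y)^2 * (Mnorm M w)^2)"
    by (rule mult_right_mono) simp
  then show ?thesis unfolding C_def[symmetric] gy by (simp add: algebra_simps power_mult_distrib)
qed

definition Hn :: "nat \<Rightarrow> real" where "Hn n = (\<Sum>k=1..n. 1 / real k)"

lemma Hn_nonneg: "Hn n \<ge> 0" unfolding Hn_def by (rule sum_nonneg) simp

lemma Hn_Suc: "Hn (Suc m) = Hn m + 1 / real (Suc m)"
  unfolding Hn_def by simp

lemma betas_eq:
  fixes T :: "(real^'d) set"
  assumes Uq: "\<forall>c c'. (\<Sum>v\<in>T-{0}. c v *\<^sub>R v) = (\<Sum>v\<in>T-{0}. c' v *\<^sub>R v) \<longrightarrow> (\<forall>v\<in>T-{0}. c v = c' v)"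
    and out: "\<forall>v. v \<notin> T - {0} \<longrightarrow> \<beta> v = 0"
    and eq: "y + (\<Sum>v\<in>T-{0}. real (\<beta> v) *\<^sub>R v) = 0"
  shows "betas T y = \<beta>"
  unfolding betas_def
proof (rule the_equality)
  show "(\<forall>v. v \<notin> T - {0} \<longrightarrow> \<beta> v = 0) \<and> y + (\<Sum>v\<in>T-{0}. real (\<beta> v) *\<^sub>R v) = 0"
    using out eq by simp
  fix \<beta>' assume H: "(\<forall>v. v \<notin> T - {0} \<longrightarrow> \<beta>' v = 0) \<and> y + (\<Sum>v\<in>T-{0}. real (\<beta>' v) *\<^sub>R v) = 0"
  have "(\<Sum>v\<in>T-{0}. real (\<beta>' v) *\<^sub>R v) = - y" using H by (simp add: add_eq_0_iff)
  moreover have "(\<Sum>v\<in>T-{0}. real (\<beta> v) *\<^sub>R v) = - y" using eq by (simp add: add_eq_0_iff)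
  ultimately have "\<forall>v\<in>T-{0}. real (\<beta>' v) = real (\<beta> v)"
    using Uq[rule_format, of "\<lambda>v. real (\<beta>' v)" "\<lambda>v. real (\<beta> v)"] by simp
  then show "\<beta>' = \<beta>" using H out by (metis of_nat_eq_iff ext)
qed

lemma delta_val:
  fixes T :: "(real^'d) set"
  assumes fin: "finite T" and z0: "0 \<in> T"
    and Uq: "\<forall>c c'. (\<Sum>v\<in>T-{0}. c v *\<^sub>R v) = (\<Sum>v\<in>T-{0}. c' v *\<^sub>R v) \<longrightarrow> (\<forall>v\<in>T-{0}. c v = c' v)"
    and out: "\<forall>v. v \<notin> T - {0} \<longrightarrow> \<beta> v = 0"
    and eq: "y + (\<Sum>v\<in>T-{0}. real (\<beta> v) *\<^sub>R v) = 0"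
  shows "delta_plus M T y = ennreal (Mnorm M y + (sin (angleM M T))\<^sup>2 * (\<Sum>v\<in>T-{0}. Hn (\<beta> v) * Mnorm M v))"
proof -
  have "- y = (\<Sum>v\<in>T-{0}. real (\<beta> v) *\<^sub>R v)" using eq by (simp add: add_eq_0_iff)
  then have "- y \<in> cone_of T" unfolding cone_iff[OF fin z0] by (intro exI[of _ "\<lambda>v. real (\<beta> v)"]) auto
  moreover have "betas T y = \<beta>" by (rule betas_eq[OF Uq out eq])
  ultimately show ?thesis by (simp add: delta_plus_def Hn_def)
qed

theorem proposition1p8:
  fixes M :: "real^'d^'d" and \<T> :: "(real^'d) set set" and T :: "(real^'d) set"
  assumes "sym_posdef M"
    and "M_reduced_mesh M \<T>"
    and "T \<in> \<T>"
  shows "super_solution M \<T> (delta_plus M T)"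
proof -
  note pos = assms(1)
  have fin: "finite T" and card: "card T = CARD('d) + 1" and z0: "0 \<in> T"
    and vol: "measure lebesgue (convex hull T) = 1 / fact CARD('d)"
    and lat: "\<forall>v\<in>T. lattice_pt v" and nn: "\<forall>v\<in>T-{0}. \<forall>w\<in>T-{0}. Mip M v w \<ge> 0"
    using assms(2,3) unfolding M_reduced_mesh_def by blast+
  have ne: "T - {0} \<noteq> {}"
  proof
    assume "T - {0} = {}"
    then have "T = {0}" using z0 by blast
    then show False using card by simp
  qed
  have UZ: "(\<forall>c c'. (\<Sum>v\<in>T-{0}. c v *\<^sub>R v) = (\<Sum>v\<in>T-{0}. c' v *\<^sub>R v) \<longrightarrow> (\<forall>v\<in>T-{0}. c v = c' v))
       \<and> (\<forall>c z. lattice_pt z \<and> z = (\<Sum>v\<in>T-{0}. c v *\<^sub>R v) \<longrightarrow> (\<forall>v\<in>T-{0}. c v \<in> \<int>))"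
    by (rule unimodular[OF fin card z0 vol lat])
  then have Uq: "\<forall>c c'. (\<Sum>v\<in>T-{0}. c v *\<^sub>R v) = (\<Sum>v\<in>T-{0}. c' v *\<^sub>R v) \<longrightarrow> (\<forall>v\<in>T-{0}. c v = c' v)"
    and Zi: "\<forall>c z. lattice_pt z \<and> z = (\<Sum>v\<in>T-{0}. c v *\<^sub>R v) \<longrightarrow> (\<forall>v\<in>T-{0}. c v \<in> \<int>)"
    by blast+
  define C where "C = cos_angleM M T"
  define s2 where "s2 = (sin (angleM M T))\<^sup>2"
  have C0: "0 \<le> C" and C1: "C \<le> 1" unfolding C_def using cos_facts[OF pos fin z0 nn ne] by auto
  have s2C: "s2 = 1 - C^2" unfolding s2_def angleM_def C_def[symmetric] using sin_sq[OF C0 C1] .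
  have s20: "s2 \<ge> 0" unfolding s2_def by simp
  show ?thesis unfolding super_solution_def
  proof (intro conjI allI impI)
    have "delta_plus M T 0 = ennreal (Mnorm M 0 + (sin (angleM M T))\<^sup>2 * (\<Sum>v\<in>T-{0}. Hn ((\<lambda>_. 0) v) * Mnorm M v))"
      by (rule delta_val[OF fin z0 Uq]) auto
    then show "delta_plus M T 0 = 0" by (simp add: Hn_def)
  next
    fix z :: "real^'d" assume zH: "lattice_pt z \<and> z \<noteq> 0"
    show "HopfLax M \<T> (delta_plus M T) z \<le> delta_plus M T z"
    proof (cases "- z \<in> cone_of T")
      case False
      then show ?thesis by (simp add: delta_plus_def)
    next
      case True
      then obtain c where c0: "\<forall>v\<in>T-{0}. c v \<ge> 0" and cz: "- z = (\<Sum>v\<in>T-{0}. c v *\<^sub>R v)"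
        unfolding cone_iff[OF fin z0] by blast
      have "lattice_pt (- z)" using zH by (simp add: lattice_pt_def)
      then have cI: "\<forall>v\<in>T-{0}. c v \<in> \<int>" using Zi cz by blast
      define \<beta> where "\<beta> v = (if v \<in> T - {0} then nat \<lfloor>c v\<rfloor> else 0)" for v
      have \<beta>c: "real (\<beta> v) = c v" if "v \<in> T - {0}" for v
      proof -
        have "c v \<in> \<int>" "c v \<ge> 0" using cI c0 that by auto
        then show ?thesis using that by (simp add: \<beta>_def)
      qed
      have out: "\<forall>v. v \<notin> T - {0} \<longrightarrow> \<beta> v = 0" by (simp add: \<beta>_def)
      define u where "u = - z"
      have u0: "u \<noteq> 0" using zH by (simp add: u_def)
      have uS: "u = (\<Sum>v\<in>T-{0}. real (\<beta> v) *\<^sub>R v)"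
        unfolding u_def cz by (rule sum.cong) (auto simp: \<beta>c)
      have eqz: "z + (\<Sum>v\<in>T-{0}. real (\<beta> v) *\<^sub>R v) = 0" using uS unfolding u_def by (metis add.right_inverse)
      define a where "a = Mnorm M u"
      have ap: "a > 0" unfolding a_def using Mnorm_pos[OF pos u0] .
      have za: "Mnorm M z = a" unfolding a_def u_def by (simp add: Mnorm_uminus)
      define Hs where "Hs = (\<Sum>v\<in>T-{0}. Hn (\<beta> v) * Mnorm M v)"
      have dz: "delta_plus M T z = ennreal (a + s2 * Hs)"
        using delta_val[OF fin z0 Uq out eqz] za by (simp add: s2_def Hs_def)
      define W where "W = {v \<in> T - {0}. \<beta> v > 0}"
      have WT: "W \<subseteq> T - {0}" by (auto simp: W_def)
      have finW: "finite W" using fin WT finite_subset by blast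
      have toW: "(\<Sum>v\<in>T-{0}. f v) = (\<Sum>v\<in>W. f v)" if "\<And>v. v \<in> T - {0} \<Longrightarrow> \<beta> v = 0 \<Longrightarrow> f v = 0"
        for f :: "real^'d \<Rightarrow> 'b::comm_monoid_add"
        by (rule sum.mono_neutral_right) (use fin WT that in \<open>auto simp: W_def\<close>)
      have uW: "u = (\<Sum>w\<in>W. real (\<beta> w) *\<^sub>R w)" using uS toW[of "\<lambda>v. real (\<beta> v) *\<^sub>R v"] by simp
      have Wne: "W \<noteq> {}" using uW u0 by auto
      define B where "B = (\<Sum>w\<in>W. real (\<beta> w))"
      have Bp: "B > 0" unfolding B_def using finW Wne by (intro sum_pos) (auto simp: W_def)
      define \<alpha> where "\<alpha> w = real (\<beta> w) / B" for w
      define D where "D w = Mnorm M (u - w) + s2 * (Hs - Mnorm M w / real (\<beta> w))" for w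
      have wfacts: "delta_plus M T (z + w) = ennreal (D w) \<and> D w \<ge> 0 \<and>
          real (\<beta> w) * (Mnorm M (u - w) - a + Mip M u w / a) \<le> s2 * Mnorm M w" if w: "w \<in> W" for w
      proof -
        have wT: "w \<in> T - {0}" using w WT by auto
        have bw: "\<beta> w \<ge> 1" using w by (auto simp: W_def)
        define \<beta>' where "\<beta>' = \<beta>(w := \<beta> w - 1)"
        have out': "\<forall>v. v \<notin> T - {0} \<longrightarrow> \<beta>' v = 0" using out wT by (simp add: \<beta>'_def)
        have finT0: "finite (T - {0})" using fin by simp
        have s1: "(\<Sum>v\<in>T-{0}. real (\<beta>' v) *\<^sub>R v) = real (\<beta>' w) *\<^sub>R w + (\<Sum>v\<in>T-{0}-{w}. real (\<beta> v) *\<^sub>R v)"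
        proof -
          have "(\<Sum>v\<in>T-{0}. real (\<beta>' v) *\<^sub>R v) = real (\<beta>' w) *\<^sub>R w + (\<Sum>v\<in>T-{0}-{w}. real (\<beta>' v) *\<^sub>R v)"
            by (rule sum.remove[OF finT0 wT])
          also have "(\<Sum>v\<in>T-{0}-{w}. real (\<beta>' v) *\<^sub>R v) = (\<Sum>v\<in>T-{0}-{w}. real (\<beta> v) *\<^sub>R v)"
            by (rule sum.cong) (auto simp: \<beta>'_def)
          finally show ?thesis .
        qed
        have s2': "u = real (\<beta> w) *\<^sub>R w + (\<Sum>v\<in>T-{0}-{w}. real (\<beta> v) *\<^sub>R v)"
          unfolding uS by (rule sum.remove[OF finT0 wT])
        have s3: "real (\<beta>' w) *\<^sub>R w = real (\<beta> w) *\<^sub>R w - w" using bw by (simp add: \<beta>'_def of_nat_diff algebra_simps)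
        have sum': "(\<Sum>v\<in>T-{0}. real (\<beta>' v) *\<^sub>R v) = u - w"
          unfolding s1 s3 using s2' by (simp add: algebra_simps)
        have eq': "(z + w) + (\<Sum>v\<in>T-{0}. real (\<beta>' v) *\<^sub>R v) = 0" unfolding sum' u_def by simp
        have dzw: "delta_plus M T (z + w) = ennreal (Mnorm M (z + w) + s2 * (\<Sum>v\<in>T-{0}. Hn (\<beta>' v) * Mnorm M v))"
          using delta_val[OF fin z0 Uq out' eq'] by (simp add: s2_def)
        have Hsum: "(\<Sum>v\<in>T-{0}. Hn (\<beta>' v) * Mnorm M v) = Hs - Mnorm M w / real (\<beta> w)"
        proof -
          have "(\<Sum>v\<in>T-{0}. Hn (\<beta>' v) * Mnorm M v) = Hn (\<beta>' w) * Mnorm M w + (\<Sum>v\<in>T-{0}-{w}. Hn (\<beta>' v) * Mnorm M v)"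
            by (rule sum.remove[OF finT0 wT])
          also have "(\<Sum>v\<in>T-{0}-{w}. Hn (\<beta>' v) * Mnorm M v) = (\<Sum>v\<in>T-{0}-{w}. Hn (\<beta> v) * Mnorm M v)"
            by (rule sum.cong) (auto simp: \<beta>'_def)
          finally have A1: "(\<Sum>v\<in>T-{0}. Hn (\<beta>' v) * Mnorm M v) = Hn (\<beta>' w) * Mnorm M w + (\<Sum>v\<in>T-{0}-{w}. Hn (\<beta> v) * Mnorm M v)" .
          have A2: "Hs = Hn (\<beta> w) * Mnorm M w + (\<Sum>v\<in>T-{0}-{w}. Hn (\<beta> v) * Mnorm M v)"
            unfolding Hs_def by (rule sum.remove[OF finT0 wT])
          have "\<beta> w = Suc (\<beta> w - 1)" using bw by simp
          then have "Hn (\<beta> w) = Hn (\<beta> w - 1) + 1 / real (\<beta> w)" by (metis Hn_Suc)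
          then have A3: "Hn (\<beta>' w) = Hn (\<beta> w) - 1 / real (\<beta> w)" by (simp add: \<beta>'_def)
          show ?thesis unfolding A1 A2 A3 by (simp add: algebra_simps)
        qed
        have nzw: "Mnorm M (z + w) = Mnorm M (u - w)"
        proof -
          have "z + w = - (u - w)" by (simp add: u_def)
          then show ?thesis by (metis Mnorm_uminus)
        qed
        have Dnn: "(\<Sum>v\<in>T-{0}. Hn (\<beta>' v) * Mnorm M v) \<ge> 0"
          by (rule sum_nonneg) (simp add: Hn_nonneg Mnorm_nonneg[OF pos])
        have dD: "delta_plus M T (z + w) = ennreal (D w)" unfolding dzw nzw Hsum D_def ..
        have D0: "D w \<ge> 0" unfolding D_def Hsum[symmetric]
          using Dnn s20 Mnorm_nonneg[OF pos, of "u - w"] by simp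
        define b where "b = Mnorm M w"
        define R where "R = Mnorm M (u - w)"
        define g where "g = Mip M u w"
        have w0: "w \<noteq> 0" using wT by simp
        have bp: "b > 0" unfolding b_def by (rule Mnorm_pos[OF pos w0])
        have b2: "b^2 = Mip M w w" unfolding b_def by (rule Mnorm_sq[OF pos])
        have R2: "R^2 = Mip M (u - w) (u - w)" unfolding R_def by (rule Mnorm_sq[OF pos])
        have a2': "a^2 = Mip M u u" unfolding a_def by (rule Mnorm_sq[OF pos])
        have sy: "Mip M w u = g" unfolding g_def by (rule Mip_sym[OF pos])
        have "Mip M (u - w) (u - w) = Mip M u u - 2 * g + Mip M w w"
          using sy by (simp add: Mip_diff_left Mip_diff_right g_def)
        then have ga: "a^2 = R^2 + 2*g - b^2" using R2 a2' b2 by linarith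
        have gge: "g \<ge> real (\<beta> w) * b^2"
        proof -
          have "g = (\<Sum>v\<in>T-{0}. real (\<beta> v) * Mip M v w)"
            unfolding g_def uS by (simp add: Mip_sum_left Mip_scale_left)
          moreover have "real (\<beta> w) * Mip M w w \<le> (\<Sum>v\<in>T-{0}. real (\<beta> v) * Mip M v w)"
            by (rule member_le_sum[OF wT _ finT0, of "\<lambda>v. real (\<beta> v) * Mip M v w"]) (use nn wT in auto)
          ultimately show ?thesis using b2 by simp
        qed
        have gb: "g - b^2 = Mip M (u - w) w" using b2 by (simp add: g_def Mip_diff_left)
        have csi: "(g - b^2)^2 \<le> R^2 * b^2"
          using Mip_CS[OF pos, of "u - w" w] unfolding gb[symmetric] R2[symmetric] b2[symmetric] .
        have conei: "R^2 * b^2 - (g - b^2)^2 \<le> s2 * R^2 * b^2"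
        proof (cases "u - w = 0")
          case True
          then have "R = 0" unfolding R_def by simp
          then show ?thesis by simp
        next
          case False
          have "u - w \<in> cone_of T" unfolding cone_iff[OF fin z0] sum'[symmetric]
            by (intro exI[of _ "\<lambda>v. real (\<beta>' v)"]) auto
          from cone_angle[OF pos fin z0 nn ne this False wT]
          have "R^2 * b^2 - (Mip M (u - w) w)^2 \<le> (1 - C^2) * (R^2 * b^2)"
            unfolding R_def b_def C_def .
          then show ?thesis unfolding gb s2C by (simp add: algebra_simps)
        qed
        have "real (\<beta> w) * (R - a + g / a) \<le> s2 * b"
          by (rule key_ineq[OF bp _ gge ga _ _ csi conei s20])
             (use bw in \<open>auto simp: a_def R_def Mnorm_nonneg[OF pos]\<close>)
        then show ?thesis using dD D0 by (simp add: R_def g_def b_def)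
      qed
      have \<alpha>0: "\<alpha> w \<ge> 0" for w using Bp by (simp add: \<alpha>_def)
      have \<alpha>1: "sum \<alpha> W = 1" using Bp by (simp add: \<alpha>_def B_def sum_divide_distrib[symmetric])
      define X where "X = ennreal (Mnorm M (\<Sum>w\<in>W. \<alpha> w *\<^sub>R w)) + (\<Sum>w\<in>W. ennreal (\<alpha> w) * delta_plus M T (z + w))"
      have mem: "X \<in> {ennreal (Mnorm M (\<Sum>w\<in>W. \<alpha> w *\<^sub>R w)) + (\<Sum>w\<in>W. ennreal (\<alpha> w) * delta_plus M T (z + w)) | S W \<alpha>.
        S \<in> \<T> \<and> W \<subseteq> S - {0} \<and> W \<noteq> {} \<and> (\<forall>w\<in>W. \<alpha> w \<ge> 0) \<and> sum \<alpha> W = 1}"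
        unfolding X_def using assms(3) WT Wne \<alpha>0 \<alpha>1 by blast
      have HX: "HopfLax M \<T> (delta_plus M T) z \<le> X" unfolding HopfLax_def by (rule Inf_lower[OF mem])
      have sumW: "(\<Sum>w\<in>W. \<alpha> w *\<^sub>R w) = (1 / B) *\<^sub>R u"
        unfolding uW scaleR_sum_right by (rule sum.cong) (auto simp: \<alpha>_def)
      have n1: "Mnorm M (\<Sum>w\<in>W. \<alpha> w *\<^sub>R w) = a / B"
        unfolding sumW Mnorm_scale using Bp by (simp add: a_def)
      have n2: "(\<Sum>w\<in>W. ennreal (\<alpha> w) * delta_plus M T (z + w)) = ennreal (\<Sum>w\<in>W. \<alpha> w * D w)"
      proof -
        have "(\<Sum>w\<in>W. ennreal (\<alpha> w) * delta_plus M T (z + w)) = (\<Sum>w\<in>W. ennreal (\<alpha> w * D w))"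
          by (rule sum.cong) (use wfacts \<alpha>0 in \<open>auto simp: ennreal_mult\<close>)
        also have "\<dots> = ennreal (\<Sum>w\<in>W. \<alpha> w * D w)"
          by (rule sum_ennreal) (use wfacts \<alpha>0 in auto)
        finally show ?thesis .
      qed
      have nnS: "(\<Sum>w\<in>W. \<alpha> w * D w) \<ge> 0" by (rule sum_nonneg) (use wfacts \<alpha>0 in auto)
      have Xe: "X = ennreal (a / B + (\<Sum>w\<in>W. \<alpha> w * D w))"
        unfolding X_def n1 n2 using ap Bp nnS by simp
      have gs: "(\<Sum>w\<in>W. real (\<beta> w) * Mip M u w) = a^2"
      proof -
        have "a^2 = Mip M u u" unfolding a_def by (rule Mnorm_sq[OF pos])
        also have "\<dots> = (\<Sum>w\<in>W. real (\<beta> w) * Mip M u w)"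
          by (subst (2) uW) (simp add: Mip_sum_right Mip_scale_right)
        finally show ?thesis by simp
      qed
      have ineq: "a / B + (\<Sum>w\<in>W. (real (\<beta> w) / B) * (Mnorm M (u - w) + s2 * (Hs - Mnorm M w / real (\<beta> w))))
          \<le> a + s2 * Hs"
        by (rule sum_ineq[OF finW B_def Bp _ ap gs]) (use wfacts in \<open>auto simp: W_def\<close>)
      have "X \<le> ennreal (a + s2 * Hs)"
        unfolding Xe by (rule ennreal_leI) (use ineq in \<open>simp add: \<alpha>_def D_def\<close>)
      then show ?thesis using HX dz by simp
    qed
  qed
qed

end
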